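(* Let $(\Sigma,\theta)$ be a topological space. The subword topology on $\Sigma^*$ is the least fixed point of the map $S$ sending a topology $\tau$ on $\Sigma^*$ to the topology generated by the sets $\uparrow_{\le^*}(UV)$ for $U,V\in\tau$, and $\uparrow_{\le^*}W$ for $W\in\theta$.
   Context: $\Sigma^*$ is the set of finite words; $UV$ is concatenation of sets of words; elements of $\Sigma$ are identified with one-letter words. $\le$ is the specialisation preorder of $\theta$ ($x\le y$ iff every open set containing $x$ contains $y$). Higman's ordering: $u\le^* w$ iff there is a strictly increasing $h:\{1,\dots,|u|\}\to\{1,\dots,|w|\}$ with $u_i\le w_{h(i)}$ for all $i$; $\uparrow_{\le^*}E$ is the upward closure of $E$. The subword topology on $\Sigma^*$ is generated by the sets $\Sigma^*U_1\Sigma^*\cdots\Sigma^*U_n\Sigma^*$ with $n\ge0$ and $U_i\in\theta$. *)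

theory Defs
  imports "HOL-Analysis.Analysis"
begin

definition spec_le :: "'a topology \<Rightarrow> 'a \<Rightarrow> 'a \<Rightarrow> bool" where
  "spec_le \<theta> x y \<longleftrightarrow> (\<forall>U. openin \<theta> U \<longrightarrow> x \<in> U \<longrightarrow> y \<in> U)"

definition higman_le :: "'a topology \<Rightarrow> 'a list \<Rightarrow> 'a list \<Rightarrow> bool" where
  "higman_le \<theta> u w \<longleftrightarrow>
     (\<exists>h. strict_mono_on {..<length u} h \<and> h ` {..<length u} \<subseteq> {..<length w} \<and>
          (\<forall>i<length u. spec_le \<theta> (u ! i) (w ! h i)))"

definition up_higman :: "'a topology \<Rightarrow> 'a list set \<Rightarrow> 'a list set" where
  "up_higman \<theta> E = {w. \<exists>u\<in>E. higman_le \<theta> u w}"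

definition conc :: "'a list set \<Rightarrow> 'a list set \<Rightarrow> 'a list set" where
  "conc U V = {u @ v | u v. u \<in> U \<and> v \<in> V}"

definition letters :: "'a set \<Rightarrow> 'a list set" where
  "letters W = {[a] | a. a \<in> W}"

definition gen_words :: "'a list set set \<Rightarrow> 'a list topology" where
  "gen_words B = topology_generated_by (insert UNIV B)"

fun pattern :: "'a set list \<Rightarrow> 'a list set" where
  "pattern [] = UNIV"
| "pattern (U # Us) = conc UNIV (conc (letters U) (pattern Us))"

definition subword_topology :: "'a topology \<Rightarrow> 'a list topology" where
  "subword_topology \<theta> = gen_words {pattern Us | Us. \<forall>U\<in>set Us. openin \<theta> U}"

definition S_map :: "'a topology \<Rightarrow> 'a list topology \<Rightarrow> 'a list topology" where
  "S_map \<theta> \<tau> = gen_words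
     ({up_higman \<theta> (conc U V) | U V. openin \<tau> U \<and> openin \<tau> V}
      \<union> {up_higman \<theta> (letters W) | W. openin \<theta> W})"

end

theory Submission imports Defs begin

lemma gen_open:
  assumes "generate_topology_on B s" "\<And>b. b \<in> B \<Longrightarrow> openin T b"
  shows "openin T s"
  using assms by induction auto

lemma pattern_Cons_iff:
  "w \<in> pattern (U # Us) \<longleftrightarrow> (\<exists>x a y. w = x @ a # y \<and> a \<in> U \<and> y \<in> pattern Us)"
  unfolding pattern.simps conc_def letters_def by (auto, blast, metis append.assoc append_Cons append_Nil)

declare pattern.simps(2)[simp del]

lemma pattern_Nil_notin: "[] \<notin> pattern (U # Us)"
  unfolding pattern_Cons_iff by auto

lemma pattern_Cons_Cons:
  "a # w \<in> pattern (U # Us) \<longleftrightarrow> (a \<in> U \<and> w \<in> pattern Us) \<or> w \<in> pattern (U # Us)"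
proof
  assume "a # w \<in> pattern (U # Us)"
  then obtain x b y where "a # w = x @ b # y" "b \<in> U" "y \<in> pattern Us"
    by (auto simp: pattern_Cons_iff)
  then show "(a \<in> U \<and> w \<in> pattern Us) \<or> w \<in> pattern (U # Us)"
    by (cases x) (auto simp: pattern_Cons_iff)
next
  assume "(a \<in> U \<and> w \<in> pattern Us) \<or> w \<in> pattern (U # Us)"
  then show "a # w \<in> pattern (U # Us)"
  proof
    assume "a \<in> U \<and> w \<in> pattern Us"
    then show ?thesis unfolding pattern_Cons_iff by (metis append_Nil)
  next
    assume "w \<in> pattern (U # Us)"
    then obtain x b y where "w = x @ b # y" "b \<in> U" "y \<in> pattern Us"
      by (auto simp: pattern_Cons_iff)
    then show ?thesis unfolding pattern_Cons_iff by (metis append_Cons)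
  qed
qed

lemma pattern_prepend: "w \<in> pattern Us \<Longrightarrow> x @ w \<in> pattern Us"
  by (cases Us) (auto simp: pattern_Cons_iff, metis append.assoc)

lemma pattern_append: "u \<in> pattern Us \<Longrightarrow> v \<in> pattern Vs \<Longrightarrow> u @ v \<in> pattern (Us @ Vs)"
proof (induction Us arbitrary: u)
  case Nil then show ?case by (simp add: pattern_prepend)
next
  case (Cons U Us)
  then obtain x a y where "u = x @ a # y" "a \<in> U" "y \<in> pattern Us"
    by (auto simp: pattern_Cons_iff)
  with Cons.IH[of y] Cons.prems show ?case by (auto simp: pattern_Cons_iff)
qed

lemma pattern_split: "w \<in> pattern (Us @ Vs) \<Longrightarrow> \<exists>u v. w = u @ v \<and> u \<in> pattern Us \<and> v \<in> pattern Vs"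
proof (induction Us arbitrary: w)
  case Nil then show ?case by force
next
  case (Cons U Us)
  then obtain x a y where "w = x @ a # y" "a \<in> U" "y \<in> pattern (Us @ Vs)"
    by (auto simp: pattern_Cons_iff)
  with Cons.IH[of y] obtain u v where "y = u @ v" "u \<in> pattern Us" "v \<in> pattern Vs" by auto
  then show ?case using \<open>w = _\<close> \<open>a \<in> U\<close>
    by (intro exI[of _ "x @ a # u"] exI[of _ v]) (auto simp: pattern_Cons_iff)
qed

lemma pattern_mono_hd: "U \<subseteq> V \<Longrightarrow> pattern Us \<subseteq> pattern Vs \<Longrightarrow> pattern (U # Us) \<subseteq> pattern (V # Vs)"
  apply (rule subsetI) unfolding pattern_Cons_iff by blast

lemma pattern_Cons_sub: "pattern Us \<subseteq> pattern Vs \<Longrightarrow> pattern (U # Us) \<subseteq> pattern Vs"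
  by (auto simp: pattern_Cons_iff intro!: pattern_prepend[of _ _ "_ @ [_]", simplified])

lemma pattern_inter:
  assumes "u \<in> pattern Us" "u \<in> pattern Vs" "\<forall>U\<in>set Us. openin \<theta> U" "\<forall>U\<in>set Vs. openin \<theta> U"
  shows "\<exists>Ws. (\<forall>U\<in>set Ws. openin \<theta> U) \<and> u \<in> pattern Ws \<and> pattern Ws \<subseteq> pattern Us \<inter> pattern Vs"
  using assms
proof (induction u arbitrary: Us Vs)
  case Nil
  then have "Us = []" "Vs = []" by (metis neq_Nil_conv pattern_Nil_notin)+
  then show ?case by (intro exI[of _ "[]"]) auto
next
  case (Cons a w)
  show ?case
  proof (cases "Us = [] \<or> Vs = []")
    case True then show ?thesis using Cons.prems by (metis Int_UNIV_left Int_UNIV_right order_refl pattern.simps(1))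
  next
    case False
    then obtain U Us' V Vs' where UV: "Us = U # Us'" "Vs = V # Vs'" by (auto simp: neq_Nil_conv)
    consider "a \<in> U \<and> w \<in> pattern Us'" "a \<in> V \<and> w \<in> pattern Vs'"
      | "a \<in> U \<and> w \<in> pattern Us'" "w \<in> pattern Vs"
      | "w \<in> pattern Us" "a \<in> V \<and> w \<in> pattern Vs'"
      | "w \<in> pattern Us" "w \<in> pattern Vs"
      using Cons.prems(1,2) UV pattern_Cons_Cons by metis
    then show ?thesis
    proof cases
      case 1
      with Cons.IH[of Us' Vs'] Cons.prems UV obtain Ws where
        "\<forall>U\<in>set Ws. openin \<theta> U" "w \<in> pattern Ws" "pattern Ws \<subseteq> pattern Us' \<inter> pattern Vs'" by auto
      moreover have "pattern ((U \<inter> V) # Ws) \<subseteq> pattern (U # Us')" "pattern ((U \<inter> V) # Ws) \<subseteq> pattern (V # Vs')"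
        using calculation by (intro pattern_mono_hd; auto)+
      ultimately show ?thesis using 1 Cons.prems UV
        by (intro exI[of _ "(U \<inter> V) # Ws"]) (auto simp: pattern_Cons_Cons)
    next
      case 2
      with Cons.IH[of Us' Vs] Cons.prems UV obtain Ws where
        "\<forall>U\<in>set Ws. openin \<theta> U" "w \<in> pattern Ws" "pattern Ws \<subseteq> pattern Us' \<inter> pattern Vs" by auto
      moreover have "pattern (U # Ws) \<subseteq> pattern (U # Us')" "pattern (U # Ws) \<subseteq> pattern Vs"
        using calculation by (intro pattern_mono_hd pattern_Cons_sub; auto)+
      ultimately show ?thesis using 2 Cons.prems UV
        by (intro exI[of _ "U # Ws"]) (auto simp: pattern_Cons_Cons)
    next
      case 3
      with Cons.IH[of Us Vs'] Cons.prems UV obtain Ws where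
        "\<forall>U\<in>set Ws. openin \<theta> U" "w \<in> pattern Ws" "pattern Ws \<subseteq> pattern Us \<inter> pattern Vs'" by auto
      moreover have "pattern (V # Ws) \<subseteq> pattern (V # Vs')" "pattern (V # Ws) \<subseteq> pattern Us"
        using calculation by (intro pattern_mono_hd pattern_Cons_sub; auto)+
      ultimately show ?thesis using 3 Cons.prems UV
        by (intro exI[of _ "V # Ws"]) (auto simp: pattern_Cons_Cons)
    next
      case 4
      with Cons.IH[of Us Vs] Cons.prems obtain Ws where
        "\<forall>U\<in>set Ws. openin \<theta> U" "w \<in> pattern Ws" "pattern Ws \<subseteq> pattern Us \<inter> pattern Vs" by auto
      then show ?thesis
        by (intro exI[of _ Ws]) (auto dest: pattern_prepend[of _ _ "[a]"])
    qed
  qed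
qed

lemma spec_le_refl: "spec_le \<theta> a a"
  by (simp add: spec_le_def)

lemma higman_refl: "higman_le \<theta> u u"
  unfolding higman_le_def
  by (intro exI[of _ id]) (auto simp: strict_mono_on_def spec_le_refl)

lemma higman_single: "higman_le \<theta> [a] (x @ a # y)"
  unfolding higman_le_def
  by (intro exI[of _ "\<lambda>_. length x"]) (auto simp: strict_mono_on_def spec_le_refl)

lemma higman_split:
  assumes "higman_le \<theta> (x @ a # y) w"
  shows "\<exists>w1 b w2. w = w1 @ b # w2 \<and> spec_le \<theta> a b \<and> higman_le \<theta> y w2"
proof -
  let ?u = "x @ a # y"
  obtain h where sm: "strict_mono_on {..<length ?u} h" and rng: "h ` {..<length ?u} \<subseteq> {..<length w}"
    and sp: "\<forall>i<length ?u. spec_le \<theta> (?u ! i) (w ! h i)"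
    using assms unfolding higman_le_def by blast
  have hl: "h i < length w" if "i < length ?u" for i using rng that by auto
  define k where "k = length x"
  define j where "j = h k"
  have jl: "j < length w" using rng unfolding j_def k_def image_subset_iff by simp
  have w: "w = take j w @ w ! j # drop (Suc j) w"
    using jl by (simp add: id_take_nth_drop)
  have sa: "spec_le \<theta> a (w ! j)" using sp[rule_format, of k] by (simp add: j_def k_def nth_append)
  define h' where "h' i = h (Suc k + i) - Suc j" for i
  have gt: "h (Suc k + i) > j" if "i < length y" for i
    using sm that unfolding j_def k_def strict_mono_on_def by auto
  have "higman_le \<theta> y (drop (Suc j) w)"
    unfolding higman_le_def
  proof (intro exI[of _ h'] conjI allI impI)
    show "strict_mono_on {..<length y} h'"
      unfolding strict_mono_on_def h'_def
    proof (intro allI impI)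
      fix r s assume "r \<in> {..<length y} \<and> s \<in> {..<length y} \<and> r < s"
      then have "h (Suc k + r) < h (Suc k + s)" "j < h (Suc k + r)"
        using sm gt[of r] unfolding strict_mono_on_def k_def by auto
      then show "h (Suc k + r) - Suc j < h (Suc k + s) - Suc j" by linarith
    qed
    show "h' ` {..<length y} \<subseteq> {..<length (drop (Suc j) w)}"
    proof
      fix z assume "z \<in> h' ` {..<length y}"
      then obtain i where i: "i < length y" "z = h' i" by auto
      have "h (Suc k + i) < length w" using hl[of "Suc k + i"] i(1) by (simp add: k_def)
      then show "z \<in> {..<length (drop (Suc j) w)}" using i gt[of i] by (auto simp: h'_def)
    qed
    fix i assume i: "i < length y"
    have "h (Suc k + i) < length w" using hl[of "Suc k + i"] i by (simp add: k_def)
    have "spec_le \<theta> (?u ! (Suc k + i)) (w ! h (Suc k + i))" using sp i by (auto simp: k_def)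
    moreover have "?u ! (Suc k + i) = y ! i" by (simp add: k_def nth_append)
    moreover have "drop (Suc j) w ! h' i = w ! h (Suc k + i)"
      using gt[OF i] \<open>h (Suc k + i) < length w\<close> by (simp add: h'_def)
    ultimately show "spec_le \<theta> (y ! i) (drop (Suc j) w ! h' i)" by simp
  qed
  then show ?thesis using w sa by blast
qed

lemma pattern_up:
  assumes "higman_le \<theta> u w" "u \<in> pattern Us" "\<forall>U\<in>set Us. openin \<theta> U"
  shows "w \<in> pattern Us"
  using assms
proof (induction Us arbitrary: u w)
  case Nil then show ?case by simp
next
  case (Cons U Us)
  then obtain x a y where "u = x @ a # y" "a \<in> U" "y \<in> pattern Us"
    by (auto simp: pattern_Cons_iff)
  with Cons.prems(1) higman_split obtain w1 b w2 where
    "w = w1 @ b # w2" "spec_le \<theta> a b" "higman_le \<theta> y w2" by metis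
  moreover have "b \<in> U" using calculation(2) \<open>a \<in> U\<close> Cons.prems(3) by (auto simp: spec_le_def)
  moreover have "w2 \<in> pattern Us" using Cons.IH calculation(3) \<open>y \<in> pattern Us\<close> Cons.prems(3) by auto
  ultimately show ?case by (auto simp: pattern_Cons_iff)
qed

lemma up_pattern:
  assumes "\<forall>U\<in>set Us. openin \<theta> U"
  shows "up_higman \<theta> (pattern Us) = pattern Us"
proof
  show "up_higman \<theta> (pattern Us) \<subseteq> pattern Us"
  proof
    fix w assume "w \<in> up_higman \<theta> (pattern Us)"
    then obtain u where "u \<in> pattern Us" "higman_le \<theta> u w" unfolding up_higman_def by blast
    then show "w \<in> pattern Us" using pattern_up[of \<theta> u w Us] assms by simp
  qed
  show "pattern Us \<subseteq> up_higman \<theta> (pattern Us)"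
  proof
    fix w assume "w \<in> pattern Us"
    moreover have "higman_le \<theta> w w" by (rule higman_refl)
    ultimately show "w \<in> up_higman \<theta> (pattern Us)" unfolding up_higman_def by blast
  qed
qed

lemma single_in_pattern: "a \<in> W \<Longrightarrow> [a] \<in> pattern [W]"
  unfolding pattern_Cons_iff by (intro exI[of _ "[]"]) auto

lemma up_letters:
  assumes "openin \<theta> W"
  shows "up_higman \<theta> (letters W) = pattern [W]"
proof
  show "up_higman \<theta> (letters W) \<subseteq> pattern [W]"
  proof
    fix w assume "w \<in> up_higman \<theta> (letters W)"
    then obtain a where "a \<in> W" "higman_le \<theta> [a] w" unfolding up_higman_def letters_def by blast
    moreover have "[a] \<in> pattern [W]" using \<open>a \<in> W\<close> by (rule single_in_pattern)
    ultimately show "w \<in> pattern [W]" using pattern_up[of \<theta> "[a]" w "[W]"] assms by simp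
  qed
  show "pattern [W] \<subseteq> up_higman \<theta> (letters W)"
  proof
    fix w assume "w \<in> pattern [W]"
    then obtain x a y where "w = x @ a # y" "a \<in> W" by (auto simp: pattern_Cons_iff)
    have "[a] \<in> letters W" using \<open>a \<in> W\<close> unfolding letters_def by blast
    moreover have "higman_le \<theta> [a] w" using \<open>w = x @ a # y\<close> higman_single by simp
    ultimately show "w \<in> up_higman \<theta> (letters W)" unfolding up_higman_def by blast
  qed
qed

lemma conc_pattern: "conc (pattern Us) (pattern Vs) = pattern (Us @ Vs)"
proof
  show "conc (pattern Us) (pattern Vs) \<subseteq> pattern (Us @ Vs)"
    unfolding conc_def using pattern_append by blast
  show "pattern (Us @ Vs) \<subseteq> conc (pattern Us) (pattern Vs)"
  proof
    fix w assume "w \<in> pattern (Us @ Vs)"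
    then obtain u v where "w = u @ v" "u \<in> pattern Us" "v \<in> pattern Vs" using pattern_split by metis
    then show "w \<in> conc (pattern Us) (pattern Vs)" unfolding conc_def by blast
  qed
qed

lemma pattern_Cons_conc: "pattern (U # Us) = conc (pattern [U]) (pattern Us)"
  using conc_pattern[of "[U]" Us] by (simp only: append_Cons append_Nil)

definition PP :: "'a topology \<Rightarrow> 'a list set set" where
  "PP \<theta> = {pattern Us | Us. \<forall>U\<in>set Us. openin \<theta> U}"

lemma sw_open_iff: "openin (subword_topology \<theta>) A \<longleftrightarrow> generate_topology_on (insert UNIV (PP \<theta>)) A"
  unfolding subword_topology_def gen_words_def PP_def openin_topology_generated_by_iff ..

lemma sw_basis:
  assumes "generate_topology_on (insert UNIV (PP \<theta>)) A"
  shows "\<forall>u\<in>A. \<exists>Us. (\<forall>U\<in>set Us. openin \<theta> U) \<and> u \<in> pattern Us \<and> pattern Us \<subseteq> A"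
  using assms
proof induction
  case Empty then show ?case by simp
next
  case (Int a b)
  show ?case
  proof
    fix u assume "u \<in> a \<inter> b"
    then have "u \<in> a" "u \<in> b" by auto
    obtain Us where Us: "\<forall>U\<in>set Us. openin \<theta> U" "u \<in> pattern Us" "pattern Us \<subseteq> a"
      using Int.IH(1) \<open>u \<in> a\<close> by blast
    obtain Vs where Vs: "\<forall>U\<in>set Vs. openin \<theta> U" "u \<in> pattern Vs" "pattern Vs \<subseteq> b"
      using Int.IH(2) \<open>u \<in> b\<close> by blast
    obtain Ws where "\<forall>U\<in>set Ws. openin \<theta> U" "u \<in> pattern Ws" "pattern Ws \<subseteq> pattern Us \<inter> pattern Vs"
      using pattern_inter[OF Us(2) Vs(2) Us(1) Vs(1)] by blast
    then show "\<exists>Ws. (\<forall>U\<in>set Ws. openin \<theta> U) \<and> u \<in> pattern Ws \<and> pattern Ws \<subseteq> a \<inter> b"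
      using Us(3) Vs(3) by blast
  qed
next
  case (UN K)
  show ?case
  proof
    fix u assume "u \<in> \<Union>K"
    then obtain k where "k \<in> K" "u \<in> k" by auto
    then obtain Us where "\<forall>U\<in>set Us. openin \<theta> U" "u \<in> pattern Us" "pattern Us \<subseteq> k"
      using UN.IH by blast
    then show "\<exists>Us. (\<forall>U\<in>set Us. openin \<theta> U) \<and> u \<in> pattern Us \<and> pattern Us \<subseteq> \<Union>K"
      using \<open>k \<in> K\<close> by blast
  qed
next
  case (Basis s)
  then show ?case
  proof
    assume "s = UNIV" then show ?thesis by (intro ballI exI[of _ "[]"]) simp
  next
    assume "s \<in> PP \<theta>"
    then obtain Us where "s = pattern Us" "\<forall>U\<in>set Us. openin \<theta> U" unfolding PP_def by blast
    then show ?thesis by blast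
  qed
qed

lemma sw_of_basis:
  assumes "\<forall>u\<in>A. \<exists>Us. (\<forall>U\<in>set Us. openin \<theta> U) \<and> u \<in> pattern Us \<and> pattern Us \<subseteq> A"
  shows "generate_topology_on (insert UNIV (PP \<theta>)) A"
proof -
  let ?K = "{pattern Us | Us. (\<forall>U\<in>set Us. openin \<theta> U) \<and> pattern Us \<subseteq> A}"
  have "A = \<Union>?K"
  proof
    show "A \<subseteq> \<Union>?K"
    proof
      fix u assume "u \<in> A"
      then obtain Us where "\<forall>U\<in>set Us. openin \<theta> U" "u \<in> pattern Us" "pattern Us \<subseteq> A"
        using assms by blast
      then show "u \<in> \<Union>?K" by blast
    qed
  qed blast
  moreover have "generate_topology_on (insert UNIV (PP \<theta>)) (\<Union>?K)"
  proof (rule generate_topology_on.UN)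
    fix k assume "k \<in> ?K"
    then have "k \<in> PP \<theta>" unfolding PP_def by blast
    then show "generate_topology_on (insert UNIV (PP \<theta>)) k" by (intro generate_topology_on.Basis) simp
  qed
  ultimately show ?thesis by simp
qed

lemma pattern_sw_open: "\<forall>U\<in>set Us. openin \<theta> U \<Longrightarrow> openin (subword_topology \<theta>) (pattern Us)"
  unfolding sw_open_iff by (rule generate_topology_on.Basis) (auto simp: PP_def)

lemma up_conc_sw_open:
  assumes "openin (subword_topology \<theta>) A" "openin (subword_topology \<theta>) B"
  shows "openin (subword_topology \<theta>) (up_higman \<theta> (conc A B))"
  unfolding sw_open_iff
proof (rule sw_of_basis, rule ballI)
  fix w assume "w \<in> up_higman \<theta> (conc A B)"
  then obtain z where "z \<in> conc A B" "higman_le \<theta> z w"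
    unfolding up_higman_def by blast
  then obtain u v where uv: "u \<in> A" "v \<in> B" "higman_le \<theta> (u @ v) w"
    unfolding conc_def by blast
  obtain Us where Us: "\<forall>U\<in>set Us. openin \<theta> U" "u \<in> pattern Us" "pattern Us \<subseteq> A"
    using sw_basis assms(1) uv(1) unfolding sw_open_iff by metis
  obtain Vs where Vs: "\<forall>U\<in>set Vs. openin \<theta> U" "v \<in> pattern Vs" "pattern Vs \<subseteq> B"
    using sw_basis assms(2) uv(2) unfolding sw_open_iff by metis
  have op: "\<forall>U\<in>set (Us @ Vs). openin \<theta> U" using Us Vs by auto
  have "w \<in> pattern (Us @ Vs)"
    using pattern_up[OF uv(3) pattern_append[OF Us(2) Vs(2)] op] .
  moreover have "pattern (Us @ Vs) \<subseteq> up_higman \<theta> (conc A B)"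
  proof
    fix z assume "z \<in> pattern (Us @ Vs)"
    then obtain z1 z2 where "z = z1 @ z2" "z1 \<in> pattern Us" "z2 \<in> pattern Vs"
      using pattern_split by blast
    then have "z \<in> conc A B" using Us(3) Vs(3) unfolding conc_def by blast
    moreover have "higman_le \<theta> z z" by (rule higman_refl)
    ultimately show "z \<in> up_higman \<theta> (conc A B)" unfolding up_higman_def by blast
  qed
  ultimately show "\<exists>Ws. (\<forall>U\<in>set Ws. openin \<theta> U) \<and> w \<in> pattern Ws \<and> pattern Ws \<subseteq> up_higman \<theta> (conc A B)"
    using op by blast
qed

theorem mainTheorem10:
  fixes \<theta> :: "'a topology"
  assumes "topspace \<theta> = UNIV"
  shows "S_map \<theta> (subword_topology \<theta>) = subword_topology \<theta> \<and>
         (\<forall>\<tau>. S_map \<theta> \<tau> = \<tau> \<longrightarrow>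
              (\<forall>A. openin (subword_topology \<theta>) A \<longrightarrow> openin \<tau> A))"
proof
  let ?sw = "subword_topology \<theta>"
  define B1 where "B1 \<tau> = {up_higman \<theta> (conc U V) | U V. openin \<tau> U \<and> openin \<tau> V}
      \<union> {up_higman \<theta> (letters W) | W. openin \<theta> W}" for \<tau>
  have Sopen: "openin (S_map \<theta> \<tau>) X \<longleftrightarrow> generate_topology_on (insert UNIV (B1 \<tau>)) X" for \<tau> X
    unfolding S_map_def gen_words_def B1_def openin_topology_generated_by_iff ..
  have Sbasis: "openin (S_map \<theta> \<tau>) X" if "X \<in> B1 \<tau>" for \<tau> X
    unfolding Sopen using that by (intro generate_topology_on.Basis) simp
  have SUNIV: "openin (S_map \<theta> \<tau>) UNIV" for \<tau>
    unfolding Sopen by (intro generate_topology_on.Basis) simp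
  have pCons: "pattern (U # Us) = up_higman \<theta> (conc (pattern [U]) (pattern Us))"
    if "\<forall>V\<in>set (U # Us). openin \<theta> V" for U Us
  proof -
    have e: "up_higman \<theta> (pattern (U # Us)) = pattern (U # Us)" by (rule up_pattern[OF that])
    show ?thesis by (subst pattern_Cons_conc[symmetric]) (rule e[symmetric])
  qed
  show "S_map \<theta> ?sw = ?sw"
  proof (subst topology_eq, intro allI iffI)
    fix X assume "openin (S_map \<theta> ?sw) X"
    then have "generate_topology_on (insert UNIV (B1 ?sw)) X" unfolding Sopen .
    then show "openin ?sw X"
    proof (rule gen_open)
      fix b assume "b \<in> insert UNIV (B1 ?sw)"
      then consider "b = UNIV" | U V where "b = up_higman \<theta> (conc U V)" "openin ?sw U" "openin ?sw V"
        | W where "b = up_higman \<theta> (letters W)" "openin \<theta> W"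
        unfolding B1_def by blast
      then show "openin ?sw b"
      proof cases
        case 1 then show ?thesis using pattern_sw_open[of "[]" \<theta>] by simp
      next
        case 2 then show ?thesis using up_conc_sw_open by simp
      next
        case 3 then show ?thesis using up_letters[OF 3(2)] pattern_sw_open[of "[W]" \<theta>] by simp
      qed
    qed
  next
    fix X assume "openin ?sw X"
    then have "generate_topology_on (insert UNIV (PP \<theta>)) X" unfolding sw_open_iff .
    then show "openin (S_map \<theta> ?sw) X"
    proof (rule gen_open)
      fix b assume "b \<in> insert UNIV (PP \<theta>)"
      then show "openin (S_map \<theta> ?sw) b"
      proof
        assume "b = UNIV" then show ?thesis using SUNIV by simp
      next
        assume "b \<in> PP \<theta>"
        then obtain Us where Us: "b = pattern Us" "\<forall>U\<in>set Us. openin \<theta> U" by (auto simp: PP_def)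
        show ?thesis
        proof (cases Us)
          case Nil then show ?thesis using Us SUNIV by simp
        next
          case (Cons U Us')
          then have "b = up_higman \<theta> (conc (pattern [U]) (pattern Us'))" using Us pCons[of U Us'] by simp
          moreover have "openin ?sw (pattern [U])" "openin ?sw (pattern Us')"
            using Us Cons by (auto intro!: pattern_sw_open)
          ultimately show ?thesis by (intro Sbasis) (auto simp: B1_def)
        qed
      qed
    qed
  qed
  show "\<forall>\<tau>. S_map \<theta> \<tau> = \<tau> \<longrightarrow> (\<forall>A. openin ?sw A \<longrightarrow> openin \<tau> A)"
  proof (intro allI impI)
    fix \<tau> A assume fp: "S_map \<theta> \<tau> = \<tau>" and A: "openin ?sw A"
    have tb: "openin \<tau> X" if "X \<in> insert UNIV (B1 \<tau>)" for X
    proof -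
      have "openin (S_map \<theta> \<tau>) X" using that SUNIV[of \<tau>] Sbasis[of X \<tau>] by blast
      then show ?thesis by (simp only: fp)
    qed
    have tb2: "openin \<tau> (up_higman \<theta> (conc U V))" if "openin \<tau> U" "openin \<tau> V" for U V
      by (rule tb) (use that in \<open>auto simp: B1_def\<close>)
    have single: "openin \<tau> (pattern [U])" if "openin \<theta> U" for U
    proof -
      have "openin \<tau> (up_higman \<theta> (letters U))" by (rule tb) (use that in \<open>auto simp: B1_def\<close>)
      then show ?thesis using up_letters[OF that] by simp
    qed
    have pat: "openin \<tau> (pattern Us)" if "\<forall>U\<in>set Us. openin \<theta> U" for Us
      using that
    proof (induction Us)
      case Nil then show ?case using tb[of UNIV] by simp
    next
      case (Cons U Us)
      then have "openin \<tau> (pattern [U])" "openin \<tau> (pattern Us)" using single by auto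
      then show ?case using tb2 pCons[OF Cons.prems] by simp
    qed
    have "generate_topology_on (insert UNIV (PP \<theta>)) A" using A unfolding sw_open_iff .
    then show "openin \<tau> A"
    proof (rule gen_open)
      fix b assume "b \<in> insert UNIV (PP \<theta>)"
      then show "openin \<tau> b" using tb[of UNIV] pat unfolding PP_def by blast
    qed
  qed
qed

end
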